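(* Let $n\ge 1$, $\mathbf{C} = (C_1,\dots,C_n)\in[0,1]^n$ and $\mathbf{V} = (V_1,\dots,V_n)\in[0,1]^n$. Define $$r^{\mathbf{L}}(\mathbf{C},\mathbf{V}) = \frac{1}{n}\sum_{j=1}^n (C_j - V_j), \qquad r^{\mathbf{V}}(\mathbf{C},\mathbf{V}) = \frac{1}{n}\sqrt{\Big(\sum_{j=1}^n C_j\cos V_j\Big)^2 + \Big(\sum_{j=1}^n C_j \sin V_j\Big)^2}.$$ For $i\in\{1,\dots,n\}$ and $\Delta c>0$, let $\Delta r^{\mathbf{L}}(C_i) = r^{\mathbf{L}}(\mathbf{C}+\Delta c\,\mathbf{e}_i,\mathbf{V}) - r^{\mathbf{L}}(\mathbf{C},\mathbf{V})$ and $\Delta r^{\mathbf{V}}(C_i) = r^{\mathbf{V}}(\mathbf{C}+\Delta c\,\mathbf{e}_i,\mathbf{V}) - r^{\mathbf{V}}(\mathbf{C},\mathbf{V})$, where $\mathbf{e}_i$ is the $i$-th standard basis vector. Then $\Delta r^{\mathbf{V}}(C_i) > 0$ and $\Delta r^{\mathbf{V}}(C_i) \le \Delta r^{\mathbf{L}}(C_i) = \frac{\Delta c}{n}$.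
   Context: Here $C_j$ and $V_j$ are the consistency and volatility of the $j$-th reasoning trajectory in a group of $n$ trajectories sharing the same final answer; $r^{\mathbf{L}}$ is the linear intrinsic reward and $r^{\mathbf{V}}$ the vectorial intrinsic reward (magnitude of the averaged vectors $C_j(\cos V_j, \sin V_j)$). *)

theory Defs
  imports Complex_Main
begin

text \<open>Vectors in [0,1]^n are represented as functions nat => real, indexed by 1..n.\<close>

definition rL :: "nat \<Rightarrow> (nat \<Rightarrow> real) \<Rightarrow> (nat \<Rightarrow> real) \<Rightarrow> real" where
  "rL n C V = (1 / real n) * (\<Sum>j=1..n. C j - V j)"

definition rV :: "nat \<Rightarrow> (nat \<Rightarrow> real) \<Rightarrow> (nat \<Rightarrow> real) \<Rightarrow> real" where
  "rV n C V = (1 / real n) *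
     sqrt ((\<Sum>j=1..n. C j * cos (V j))^2 + (\<Sum>j=1..n. C j * sin (V j))^2)"

definition bump :: "(nat \<Rightarrow> real) \<Rightarrow> nat \<Rightarrow> real \<Rightarrow> nat \<Rightarrow> real" where
  "bump C i dc = C(i := C i + dc)"

end

theory Submission
  imports Defs
begin

lemma bump_sum:
  fixes f C :: "nat \<Rightarrow> real"
  assumes "i \<in> {1..n}"
  shows "(\<Sum>j=1..n. bump C i dc j * f j) = (\<Sum>j=1..n. C j * f j) + dc * f i"
proof -
  have "(\<Sum>j=1..n. bump C i dc j * f j) = (\<Sum>j=1..n. C j * f j + (if j = i then dc * f i else 0))"
    by (rule sum.cong) (auto simp: bump_def algebra_simps)
  also have "\<dots> = (\<Sum>j=1..n. C j * f j) + dc * f i"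
    using assms by (simp add: sum.distrib)
  finally show ?thesis .
qed

lemma bump_sumL:
  fixes V C :: "nat \<Rightarrow> real"
  assumes "i \<in> {1..n}"
  shows "(\<Sum>j=1..n. bump C i dc j - V j) = (\<Sum>j=1..n. C j - V j) + dc"
proof -
  have "(\<Sum>j=1..n. bump C i dc j - V j) = (\<Sum>j=1..n. (C j - V j) + (if j = i then dc else 0))"
    by (rule sum.cong) (auto simp: bump_def algebra_simps)
  also have "\<dots> = (\<Sum>j=1..n. C j - V j) + dc"
    using assms by (simp add: sum.distrib)
  finally show ?thesis .
qed

lemma key:
  fixes xa xb xc xs dc :: real
  assumes "xc^2 + xs^2 = 1" "xa*xc + xb*xs \<ge> 0" "dc > 0"
  shows "sqrt ((xa + dc*xc)^2 + (xb + dc*xs)^2) > sqrt (xa^2 + xb^2)"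
    and "sqrt ((xa + dc*xc)^2 + (xb + dc*xs)^2) \<le> sqrt (xa^2 + xb^2) + dc"
proof -
  have e: "(xa + dc*xc)^2 + (xb + dc*xs)^2 = xa^2 + xb^2 + 2*dc*(xa*xc+xb*xs) + dc^2*(xc^2+xs^2)"
    by (simp add: power2_eq_square algebra_simps)
  have "xa^2 + xb^2 < (xa + dc*xc)^2 + (xb + dc*xs)^2"
    unfolding e using assms by (simp add: add_nonneg_pos)
  then show "sqrt ((xa + dc*xc)^2 + (xb + dc*xs)^2) > sqrt (xa^2 + xb^2)"
    by (rule real_sqrt_less_mono)
  have cs: "(xa*xc + xb*xs)^2 \<le> xa^2 + xb^2"
  proof -
    have h1: "(xa*xc+xb*xs)^2 + (xa*xs - xb*xc)^2 = (xa^2+xb^2)*(xc^2+xs^2)"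
      by (simp add: power2_eq_square algebra_simps)
    have h2: "(xa*xs - xb*xc)^2 \<ge> 0" by (rule zero_le_power2)
    have h3: "(xa^2+xb^2)*(xc^2+xs^2) = xa^2+xb^2" using assms(1) by simp
    show ?thesis using h1 h2 h3 by linarith
  qed
  have "xa*xc + xb*xs \<le> sqrt (xa^2+xb^2)"
    using cs assms(2) real_le_rsqrt by blast
  then have "dc*(xa*xc + xb*xs) \<le> dc * sqrt (xa^2+xb^2)" using assms by simp
  then have "(xa + dc*xc)^2 + (xb + dc*xs)^2 \<le> (sqrt (xa^2 + xb^2) + dc)^2"
    unfolding e using assms by (simp add: power2_eq_square algebra_simps)
  then have "sqrt ((xa + dc*xc)^2 + (xb + dc*xs)^2) \<le> sqrt ((sqrt (xa^2 + xb^2) + dc)^2)"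
    by (rule real_sqrt_le_mono)
  also have "\<dots> = sqrt (xa^2 + xb^2) + dc" using assms by simp
  finally show "sqrt ((xa + dc*xc)^2 + (xb + dc*xs)^2) \<le> sqrt (xa^2 + xb^2) + dc" .
qed

theorem mainTheorem6:
  fixes n :: nat and C V :: "nat \<Rightarrow> real" and i :: nat and dc :: real
  assumes "n \<ge> 1"
    and "\<forall>j\<in>{1..n}. 0 \<le> C j \<and> C j \<le> 1"
    and "\<forall>j\<in>{1..n}. 0 \<le> V j \<and> V j \<le> 1"
    and "i \<in> {1..n}"
    and "dc > 0"
  shows "rV n (bump C i dc) V - rV n C V > 0
    \<and> rV n (bump C i dc) V - rV n C V \<le> rL n (bump C i dc) V - rL n C V
    \<and> rL n (bump C i dc) V - rL n C V = dc / real n"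
proof -
  define SA where "SA = (\<Sum>j=1..n. C j * cos (V j))"
  define SB where "SB = (\<Sum>j=1..n. C j * sin (V j))"
  define cc where "cc = cos (V i)"
  define ss where "ss = sin (V i)"
  have SA': "(\<Sum>j=1..n. bump C i dc j * cos (V j)) = SA + dc*cc"
    using bump_sum[OF assms(4)] SA_def cc_def by simp
  have SB': "(\<Sum>j=1..n. bump C i dc j * sin (V j)) = SB + dc*ss"
    using bump_sum[OF assms(4)] SB_def ss_def by simp
  have cs1: "cc^2 + ss^2 = 1" unfolding cc_def ss_def by simp
  have "SA*cc + SB*ss = (\<Sum>j=1..n. C j * cos (V j - V i))"
    unfolding SA_def SB_def cc_def ss_def
    by (simp add: sum_distrib_left sum_distrib_right sum.distrib[symmetric] cos_diff algebra_simps)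
  also have "\<dots> \<ge> 0"
  proof (rule sum_nonneg)
    fix j assume j: "j \<in> {1..n}"
    have "0 \<le> V j" "V j \<le> 1" "0 \<le> V i" "V i \<le> 1" using assms(3) j assms(4) by auto
    then have "\<bar>V j - V i\<bar> \<le> 1" by linarith
    moreover have "1 \<le> pi/2" using pi_ge_two by simp
    ultimately have "0 \<le> cos (V j - V i)" by (intro cos_ge_zero) auto
    then show "0 \<le> C j * cos (V j - V i)" using assms(2) j by simp
  qed
  finally have nn: "SA*cc + SB*ss \<ge> 0" .
  note k = key[OF cs1 nn assms(5)]
  have n0: "real n > 0" using assms(1) by simp
  have rVd: "rV n (bump C i dc) V - rV n C V
      = (sqrt ((SA + dc*cc)^2 + (SB + dc*ss)^2) - sqrt (SA^2 + SB^2)) / real n"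
    unfolding rV_def SA' SB' unfolding SA_def SB_def by (simp add: diff_divide_distrib)
  have rLd: "rL n (bump C i dc) V - rL n C V = dc / real n"
    unfolding rL_def bump_sumL[OF assms(4)] by (simp add: add_divide_distrib)
  show ?thesis
    unfolding rVd rLd using k n0
    by (auto intro: divide_pos_pos divide_right_mono)
qed

end
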